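(* Consider the single-element, single-slab periodic space-time SBP scheme $$\mathsf D_t\boldsymbol\rho+\tilde{\mathsf D}_x\langle v\boldsymbol g\rangle=-\sigma_a\boldsymbol\rho-\mathsf H_t^{-1}\mathsf t_B\mathsf t_B^\top(\boldsymbol\rho-\boldsymbol\rho(0)),$$ $$\mathsf D_t\boldsymbol g_k+\tfrac{v_k}{\varepsilon}\tilde{\mathsf D}_x\boldsymbol g_k-\tfrac1\varepsilon\langle v\tilde{\mathsf D}_x\boldsymbol g\rangle+\tfrac{v_k}{\varepsilon^2}\tilde{\mathsf D}_x\boldsymbol\rho=-\Big(\tfrac{\sigma_s}{\varepsilon^2}+\sigma_a\Big)\boldsymbol g_k-\mathsf H_t^{-1}\mathsf t_B\mathsf t_B^\top(\boldsymbol g_k-\boldsymbol g_k(0)),\quad k=1,\dots,n_v.$$ This scheme is asymptotic preserving: for fixed discretization, in the formal limit $\varepsilon\to0$ (assuming the discrete derivative approximations remain bounded) it reduces to $$\mathsf D_t\boldsymbol\rho=\tilde{\mathsf D}_x\Big(\tfrac{\langle v^2\rangle}{\sigma_s}\tilde{\mathsf D}_x\boldsymbol\rho\Big)-\sigma_a\boldsymbol\rho-\mathsf H_t^{-1}\mathsf t_B\mathsf t_B^\top(\boldsymbol\rho-\boldsymbol\rho(0)),$$ which is a consistent and stable discretization of the limit equation $\partial_t\rho=\langle v^2\rangle\partial_x\big(\tfrac1{\sigma_s}\partial_x\rho\big)-\sigma_a\rho$.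
   Context: SBP operators: $\bar{\mathsf D}=\bar{\mathsf H}^{-1}\bar{\mathsf Q}$ on nodes $x_0<\dots<x_n$ is a degree-$p$ SBP approximation of $d/dx$ if it differentiates monomials of degree $\le p$ exactly, $\bar{\mathsf H}$ is diagonal symmetric positive definite, and $\bar{\mathsf Q}+\bar{\mathsf Q}^\top=\mathrm{diag}(-1,0,\dots,0,1)=\bar{\boldsymbol t}_R\bar{\boldsymbol t}_R^\top-\bar{\boldsymbol t}_L\bar{\boldsymbol t}_L^\top$ with $\bar{\boldsymbol t}_L,\bar{\boldsymbol t}_R$ the first/last unit vectors. Spatial SBP operator $\bar{\mathsf D}_x=\bar{\mathsf H}_x^{-1}\bar{\mathsf Q}_x$ ($n_x+1$ nodes), temporal $\bar{\mathsf D}_t=\bar{\mathsf H}_t^{-1}\bar{\mathsf Q}_t$ ($n_t+1$ nodes) with first/last unit vectors $\bar{\boldsymbol t}_B,\bar{\boldsymbol t}_T$. $\mathsf D_t=\bar{\mathsf D}_t\otimes\mathsf I_{n_x}$, $\mathsf D_x=\mathsf I_{n_t}\otimes\bar{\mathsf D}_x$, $\mathsf H_t=\bar{\mathsf H}_t\otimes\mathsf I_{n_x}$, $\mathsf H_x=\mathsf I_{n_t}\otimes\bar{\mathsf H}_x$, $\mathsf t_{R/L}=\mathsf I_{n_t}\otimes\bar{\boldsymbol t}_{R/L}$, $\mathsf t_B=\bar{\boldsymbol t}_B\otimes\mathsf I_{n_x}$, where $\mathsf I_{n_x},\mathsf I_{n_t}$ are identities of sizes $n_x+1,n_t+1$.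 $\tilde{\mathsf D}_x=\mathsf D_x-\frac12\mathsf H_x^{-1}\big(\mathsf t_R(\mathsf t_R^\top-\mathsf t_L^\top)-\mathsf t_L(\mathsf t_L^\top-\mathsf t_R^\top)\big)$. Velocity nodes $v_k$, weights $\omega_k$ with $\sum\omega_k=1$, $\sum\omega_kv_k=0$; $\langle\boldsymbol a\rangle=\sum_k\omega_k\boldsymbol a_k$, $\langle v^2\rangle=\sum_k\omega_kv_k^2$. $\varepsilon>0$, $\sigma_s>0$, $\sigma_a\ge0$. A scheme is called asymptotic preserving if, for fixed discretization parameters, in the limit $\varepsilon\to0$ it becomes a consistent (and stable) discretization of the macroscopic limit equation. Stability of the limit scheme means the discrete energy $\frac12\boldsymbol\rho^\top(\bar{\boldsymbol t}_T\bar{\boldsymbol t}_T^\top\otimes\bar{\mathsf H}_x)\boldsymbol\rho$ at the final time is bounded by initial-data terms. *)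

theory Defs
  imports "HOL-Analysis.Analysis"
begin

text \<open>Grid functions: u i j is the value at time node i (0..nt) and space node j (0..nx).\<close>
type_synonym gf = "nat \<Rightarrow> nat \<Rightarrow> real"

text \<open>Degree-p SBP operator D = H^-1 Q on nodes x 0 < ... < x n, H = diag h.
  Q + Q^T = t_R t_R^T - t_L t_L^T; D differentiates monomials of degree <= p exactly.\<close>
definition sbp :: "nat \<Rightarrow> nat \<Rightarrow> (nat \<Rightarrow> real) \<Rightarrow> (nat \<Rightarrow> real) \<Rightarrow> (nat \<Rightarrow> nat \<Rightarrow> real) \<Rightarrow> bool" where
  "sbp n p x h Q \<longleftrightarrow>
     (\<forall>i<n. x i < x (Suc i)) \<and>
     (\<forall>i\<le>n. 0 < h i) \<and>
     (\<forall>i\<le>n. \<forall>j\<le>n. Q i j + Q j i =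
         (if i = n \<and> j = n then 1 else 0) - (if i = 0 \<and> j = 0 then 1 else 0)) \<and>
     (\<forall>q\<le>p. \<forall>i\<le>n. (\<Sum>j=0..n. Q i j * x j ^ q) / h i = of_nat q * x i ^ (q - 1))"

text \<open>D_t = Dbar_t (x) I : acts on the time index.\<close>
definition Dt :: "nat \<Rightarrow> (nat \<Rightarrow> real) \<Rightarrow> (nat \<Rightarrow> nat \<Rightarrow> real) \<Rightarrow> gf \<Rightarrow> gf" where
  "Dt nt ht Qt u = (\<lambda>i j. (\<Sum>l=0..nt. Qt i l * u l j) / ht i)"

text \<open>D_x = I (x) Dbar_x : acts on the space index.\<close>
definition Dx :: "nat \<Rightarrow> (nat \<Rightarrow> real) \<Rightarrow> (nat \<Rightarrow> nat \<Rightarrow> real) \<Rightarrow> gf \<Rightarrow> gf" where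
  "Dx nx hx Qx u = (\<lambda>i j. (\<Sum>l=0..nx. Qx j l * u i l) / hx j)"

text \<open>Periodic operator
  tilde D_x = D_x - 1/2 H_x^-1 (t_R (t_R^T - t_L^T) - t_L (t_L^T - t_R^T)).\<close>
definition Dxt :: "nat \<Rightarrow> (nat \<Rightarrow> real) \<Rightarrow> (nat \<Rightarrow> nat \<Rightarrow> real) \<Rightarrow> gf \<Rightarrow> gf" where
  "Dxt nx hx Qx u = (\<lambda>i j. Dx nx hx Qx u i j
      - (1/2) * ((if j = nx then u i nx - u i 0 else 0)
                 - (if j = 0 then u i 0 - u i nx else 0)) / hx j)"

text \<open>SAT term H_t^-1 t_B t_B^T (u - u(0)), with u(0) the initial data (a spatial vector).\<close>
definition sat :: "(nat \<Rightarrow> real) \<Rightarrow> gf \<Rightarrow> (nat \<Rightarrow> real) \<Rightarrow> gf" where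
  "sat ht u u0 = (\<lambda>i j. if i = 0 then (u 0 j - u0 j) / ht 0 else 0)"

definition vavg :: "nat \<Rightarrow> (nat \<Rightarrow> real) \<Rightarrow> (nat \<Rightarrow> gf) \<Rightarrow> gf" where
  "vavg nv \<omega> a = (\<lambda>i j. \<Sum>k=1..nv. \<omega> k * a k i j)"

definition scheme ::
  "nat \<Rightarrow> (nat \<Rightarrow> real) \<Rightarrow> (nat \<Rightarrow> nat \<Rightarrow> real) \<Rightarrow>
   nat \<Rightarrow> (nat \<Rightarrow> real) \<Rightarrow> (nat \<Rightarrow> nat \<Rightarrow> real) \<Rightarrow>
   nat \<Rightarrow> (nat \<Rightarrow> real) \<Rightarrow> (nat \<Rightarrow> real) \<Rightarrow> real \<Rightarrow> real \<Rightarrow> real \<Rightarrow>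
   (nat \<Rightarrow> real) \<Rightarrow> (nat \<Rightarrow> nat \<Rightarrow> real) \<Rightarrow> gf \<Rightarrow> (nat \<Rightarrow> gf) \<Rightarrow> bool" where
  "scheme nt ht Qt nx hx Qx nv v \<omega> \<sigma>s \<sigma>a \<epsilon> \<rho>0 g0 \<rho> g \<longleftrightarrow>
     (\<forall>i\<le>nt. \<forall>j\<le>nx.
        Dt nt ht Qt \<rho> i j + Dxt nx hx Qx (vavg nv \<omega> (\<lambda>k. \<lambda>i j. v k * g k i j)) i j
          = - \<sigma>a * \<rho> i j - sat ht \<rho> \<rho>0 i j) \<and>
     (\<forall>k\<in>{1..nv}. \<forall>i\<le>nt. \<forall>j\<le>nx.
        Dt nt ht Qt (g k) i j + v k / \<epsilon> * Dxt nx hx Qx (g k) i j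
          - 1 / \<epsilon> * vavg nv \<omega> (\<lambda>k'. \<lambda>i j. v k' * Dxt nx hx Qx (g k') i j) i j
          + v k / \<epsilon>\<^sup>2 * Dxt nx hx Qx \<rho> i j
          = - (\<sigma>s / \<epsilon>\<^sup>2 + \<sigma>a) * g k i j - sat ht (g k) (g0 k) i j)"

definition lim_res ::
  "nat \<Rightarrow> (nat \<Rightarrow> real) \<Rightarrow> (nat \<Rightarrow> nat \<Rightarrow> real) \<Rightarrow>
   nat \<Rightarrow> (nat \<Rightarrow> real) \<Rightarrow> (nat \<Rightarrow> nat \<Rightarrow> real) \<Rightarrow>
   nat \<Rightarrow> (nat \<Rightarrow> real) \<Rightarrow> (nat \<Rightarrow> real) \<Rightarrow> real \<Rightarrow> real \<Rightarrow>
   (nat \<Rightarrow> real) \<Rightarrow> gf \<Rightarrow> gf" where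
  "lim_res nt ht Qt nx hx Qx nv v \<omega> \<sigma>s \<sigma>a \<rho>0 \<rho> =
     (\<lambda>i j. Dt nt ht Qt \<rho> i j
        - Dxt nx hx Qx (\<lambda>i j. (\<Sum>k=1..nv. \<omega> k * v k ^ 2) / \<sigma>s * Dxt nx hx Qx \<rho> i j) i j
        + \<sigma>a * \<rho> i j + sat ht \<rho> \<rho>0 i j)"

definition lim_scheme ::
  "nat \<Rightarrow> (nat \<Rightarrow> real) \<Rightarrow> (nat \<Rightarrow> nat \<Rightarrow> real) \<Rightarrow>
   nat \<Rightarrow> (nat \<Rightarrow> real) \<Rightarrow> (nat \<Rightarrow> nat \<Rightarrow> real) \<Rightarrow>
   nat \<Rightarrow> (nat \<Rightarrow> real) \<Rightarrow> (nat \<Rightarrow> real) \<Rightarrow> real \<Rightarrow> real \<Rightarrow>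
   (nat \<Rightarrow> real) \<Rightarrow> gf \<Rightarrow> bool" where
  "lim_scheme nt ht Qt nx hx Qx nv v \<omega> \<sigma>s \<sigma>a \<rho>0 \<rho> \<longleftrightarrow>
     (\<forall>i\<le>nt. \<forall>j\<le>nx. lim_res nt ht Qt nx hx Qx nv v \<omega> \<sigma>s \<sigma>a \<rho>0 \<rho> i j = 0)"

end

theory Submission
  imports Defs
begin


definition Aop :: "nat \<Rightarrow> (nat \<Rightarrow> nat \<Rightarrow> real) \<Rightarrow> (nat \<Rightarrow> real) \<Rightarrow> nat \<Rightarrow> real" where
  "Aop n Q w j = (\<Sum>l=0..n. Q j l * w l)
     - (1/2) * ((if j = n then w n - w 0 else 0) - (if j = 0 then w 0 - w n else 0))"

lemma Dxt_Aop: "Dxt nx hx Qx u i j = Aop nx Qx (u i) j / hx j"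
  unfolding Dxt_def Dx_def Aop_def by (simp add: diff_divide_distrib)

lemma bil:
  assumes "sbp n p x h Q"
  shows "(\<Sum>j=0..n. \<Sum>l=0..n. y j * Q j l * w l) + (\<Sum>j=0..n. \<Sum>l=0..n. w j * Q j l * y l)
         = y n * w n - y 0 * w 0"
proof -
  have Qs: "\<And>j l. j \<le> n \<Longrightarrow> l \<le> n \<Longrightarrow> Q j l + Q l j =
         (if j = n \<and> l = n then 1 else 0) - (if j = 0 \<and> l = 0 then 1 else 0)"
    using assms unfolding sbp_def by blast
  have sw: "(\<Sum>j=0..n. \<Sum>l=0..n. w j * Q j l * y l) = (\<Sum>j=0..n. \<Sum>l=0..n. y j * Q l j * w l)"
    by (subst sum.swap) (simp add: mult_ac)
  have "(\<Sum>j=0..n. \<Sum>l=0..n. y j * Q j l * w l) + (\<Sum>j=0..n. \<Sum>l=0..n. y j * Q l j * w l)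
      = (\<Sum>j=0..n. \<Sum>l=0..n. y j * w l * (Q j l + Q l j))"
    by (simp add: sum.distrib[symmetric] algebra_simps)
  also have "\<dots> = (\<Sum>j=0..n. \<Sum>l=0..n. y j * w l * ((if j = n \<and> l = n then 1 else 0) - (if j = 0 \<and> l = 0 then 1 else 0)))"
    by (intro sum.cong refl) (simp add: Qs)
  also have "\<dots> = y n * w n - y 0 * w 0"
  proof -
    have e: "\<And>j l. y j * w l * ((if j = n \<and> l = n then 1 else 0) - (if j = 0 \<and> l = 0 then 1 else 0))
       = (if l = n then (if j = n then y j * w l else 0) else 0) - (if l = 0 then (if j = 0 then y j * w l else 0) else 0)"
      by simp
    show ?thesis unfolding e by (simp add: sum_subtractf)
  qed
  finally show ?thesis using sw by simp
qed


lemma ifsum: "(\<Sum>j=0..(n::nat). y j * ((if j = n then a else 0) - (if j = 0 then b else 0))) = y n * a - y 0 * (b::real)"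
proof -
  have e: "\<And>j. y j * ((if j = n then a else 0) - (if j = 0 then b else 0)) = (if j = n then y j * a else 0) - (if j = 0 then y j * b else 0)"
    by (simp add: right_diff_distrib)
  show ?thesis unfolding e by (simp add: sum_subtractf sum.delta sum.delta')
qed

lemma Aop_sum: "(\<Sum>j=0..n. y j * Aop n Q w j) = (\<Sum>j=0..n. \<Sum>l=0..n. y j * Q j l * w l)
   - (1/2) * (y n * (w n - w 0) - y 0 * (w 0 - w n))"
proof -
  have "(\<Sum>j=0..n. y j * Aop n Q w j) = (\<Sum>j=0..n. \<Sum>l=0..n. y j * Q j l * w l)
     - (1/2) * (\<Sum>j=0..n. y j * ((if j = n then w n - w 0 else 0) - (if j = 0 then w 0 - w n else 0)))"
    unfolding Aop_def by (simp add: right_diff_distrib sum_subtractf sum_distrib_left mult_ac)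
  then show ?thesis by (simp only: ifsum)
qed

lemma skew:
  assumes "sbp n p x h Q"
  shows "(\<Sum>j=0..n. y j * Aop n Q w j) = - (\<Sum>j=0..n. w j * Aop n Q y j)"
  using bil[OF assms, of y w] unfolding Aop_sum by (simp add: algebra_simps)


lemma quad_form:
  assumes "sbp n p x h Q"
  shows "(\<Sum>j=0..n. \<Sum>l=0..n. y j * Q j l * y l) = ((y n)\<^sup>2 - (y 0)\<^sup>2) / 2"
  using bil[OF assms, of y y] by (simp add: power2_eq_square)

lemma part3:
  assumes SBPt: "sbp nt pt ts ht Qt"
    and SBPx: "sbp nx px xs hx Qx"
    and wpos: "\<forall>k\<in>{1..nv}. 0 < \<omega> k"
    and sigs: "0 < \<sigma>s"
    and siga: "0 \<le> \<sigma>a"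
    and L: "lim_scheme nt ht Qt nx hx Qx nv v \<omega> \<sigma>s \<sigma>a \<rho>0 \<rho>"
  shows "(1/2) * (\<Sum>j=0..nx. hx j * (\<rho> nt j)\<^sup>2) \<le> (1/2) * (\<Sum>j=0..nx. hx j * (\<rho>0 j)\<^sup>2)"
proof -
  have htp: "\<And>i. i \<le> nt \<Longrightarrow> 0 < ht i" using SBPt unfolding sbp_def by blast
  have hxp: "\<And>j. j \<le> nx \<Longrightarrow> 0 < hx j" using SBPx unfolding sbp_def by blast
  define S where "S = (\<Sum>k=1..nv. \<omega> k * v k ^ 2)"
  have S0: "0 \<le> S" unfolding S_def using wpos by (intro sum_nonneg) (simp add: less_imp_le)
  define c where "c = S / \<sigma>s"
  have c0: "0 \<le> c" unfolding c_def using S0 sigs by simp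
  define z where "z = (\<lambda>i j. S / \<sigma>s * Dxt nx hx Qx \<rho> i j)"
  define R where "R = lim_res nt ht Qt nx hx Qx nv v \<omega> \<sigma>s \<sigma>a \<rho>0 \<rho>"
  have R0: "\<And>i j. i \<le> nt \<Longrightarrow> j \<le> nx \<Longrightarrow> R i j = 0"
    using L unfolding lim_scheme_def R_def by blast
  define F1 where "F1 = (\<lambda>i j. hx j * (\<rho> i j * (\<Sum>l=0..nt. Qt i l * \<rho> l j)))"
  define F2 where "F2 = (\<lambda>i j. ht i * (\<rho> i j * Aop nx Qx (z i) j))"
  define F3 where "F3 = (\<lambda>i j. \<sigma>a * (ht i * (hx j * (\<rho> i j)\<^sup>2)))"
  define F4 where "F4 = (\<lambda>(i::nat) j. if i = 0 then hx j * (\<rho> 0 j * (\<rho> 0 j - \<rho>0 j)) else 0)"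
  have pt: "ht i * hx j * \<rho> i j * R i j = F1 i j - F2 i j + F3 i j + F4 i j"
    if "i \<le> nt" "j \<le> nx" for i j
  proof -
    have a: "0 < ht i" "0 < hx j" using htp hxp that by auto
    have a0: "0 < ht 0" using htp by auto
    have Rz: "R i j = Dt nt ht Qt \<rho> i j - Dxt nx hx Qx z i j + \<sigma>a * \<rho> i j + sat ht \<rho> \<rho>0 i j"
      by (simp add: R_def lim_res_def z_def S_def)
    show ?thesis
      unfolding Rz F1_def F2_def F3_def F4_def Dt_def sat_def Dxt_Aop
      using a a0
      by (simp add: field_simps power2_eq_square)
  qed
  have "0 = (\<Sum>i=0..nt. \<Sum>j=0..nx. ht i * hx j * \<rho> i j * R i j)"
    by (simp add: R0)
  also have "\<dots> = (\<Sum>i=0..nt. \<Sum>j=0..nx. F1 i j - F2 i j + F3 i j + F4 i j)"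
    by (intro sum.cong refl) (simp add: pt)
  also have "\<dots> = (\<Sum>i=0..nt. \<Sum>j=0..nx. F1 i j) - (\<Sum>i=0..nt. \<Sum>j=0..nx. F2 i j)
       + (\<Sum>i=0..nt. \<Sum>j=0..nx. F3 i j) + (\<Sum>i=0..nt. \<Sum>j=0..nx. F4 i j)"
    by (simp add: sum.distrib sum_subtractf)
  finally have E: "0 = (\<Sum>i=0..nt. \<Sum>j=0..nx. F1 i j) - (\<Sum>i=0..nt. \<Sum>j=0..nx. F2 i j)
       + (\<Sum>i=0..nt. \<Sum>j=0..nx. F3 i j) + (\<Sum>i=0..nt. \<Sum>j=0..nx. F4 i j)" .
  have T1: "(\<Sum>i=0..nt. \<Sum>j=0..nx. F1 i j) = (\<Sum>j=0..nx. hx j * (((\<rho> nt j)\<^sup>2 - (\<rho> 0 j)\<^sup>2) / 2))"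
  proof -
    have "(\<Sum>i=0..nt. \<Sum>j=0..nx. F1 i j) = (\<Sum>j=0..nx. hx j * (\<Sum>i=0..nt. \<Sum>l=0..nt. \<rho> i j * Qt i l * \<rho> l j))"
      unfolding F1_def by (subst sum.swap) (simp add: sum_distrib_left mult_ac)
    also have "\<dots> = (\<Sum>j=0..nx. hx j * (((\<rho> nt j)\<^sup>2 - (\<rho> 0 j)\<^sup>2) / 2))"
      using quad_form[OF SBPt, of "\<lambda>i. \<rho> i j" for j] by (intro sum.cong refl) simp
    finally show ?thesis .
  qed
  have T2: "(\<Sum>i=0..nt. \<Sum>j=0..nx. F2 i j) \<le> 0"
  proof -
    have "(\<Sum>j=0..nx. F2 i j) \<le> 0" if "i \<le> nt" for i
    proof -
      have "(\<Sum>j=0..nx. \<rho> i j * Aop nx Qx (z i) j) = - (\<Sum>j=0..nx. z i j * Aop nx Qx (\<rho> i) j)"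
        by (rule skew[OF SBPx])
      also have "\<dots> = - (\<Sum>j=0..nx. c * ((Aop nx Qx (\<rho> i) j)\<^sup>2 / hx j))"
        unfolding z_def c_def Dxt_Aop by (simp add: power2_eq_square mult.assoc)
      also have "\<dots> \<le> 0"
        using c0 hxp by (simp, intro sum_nonneg) (simp add: less_imp_le)
      finally have "(\<Sum>j=0..nx. \<rho> i j * Aop nx Qx (z i) j) \<le> 0" .
      then have "ht i * (\<Sum>j=0..nx. \<rho> i j * Aop nx Qx (z i) j) \<le> 0"
        using htp[OF that] by (simp add: mult_nonneg_nonpos)
      then show ?thesis unfolding F2_def by (simp add: sum_distrib_left)
    qed
    then show ?thesis by (rule_tac sum_nonpos) auto
  qed
  have T3: "0 \<le> (\<Sum>i=0..nt. \<Sum>j=0..nx. F3 i j)"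
    unfolding F3_def using siga htp hxp
    by (intro sum_nonneg mult_nonneg_nonneg) (auto simp: less_imp_le)
  have T4: "(\<Sum>i=0..nt. \<Sum>j=0..nx. F4 i j) = (\<Sum>j=0..nx. hx j * (\<rho> 0 j * (\<rho> 0 j - \<rho>0 j)))"
    unfolding F4_def by (subst sum.swap) (simp add: sum.delta)
  have T5: "(\<Sum>j=0..nx. hx j * (((\<rho> nt j)\<^sup>2 - (\<rho> 0 j)\<^sup>2) / 2)) + (\<Sum>j=0..nx. hx j * (\<rho> 0 j * (\<rho> 0 j - \<rho>0 j)))
      = (1/2) * (\<Sum>j=0..nx. hx j * (\<rho> nt j)\<^sup>2) - (1/2) * (\<Sum>j=0..nx. hx j * (\<rho>0 j)\<^sup>2)
        + (1/2) * (\<Sum>j=0..nx. hx j * (\<rho> 0 j - \<rho>0 j)\<^sup>2)"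
  proof -
    have "(\<Sum>j=0..nx. hx j * (((\<rho> nt j)\<^sup>2 - (\<rho> 0 j)\<^sup>2) / 2)) + (\<Sum>j=0..nx. hx j * (\<rho> 0 j * (\<rho> 0 j - \<rho>0 j)))
       = (\<Sum>j=0..nx. hx j * (((\<rho> nt j)\<^sup>2 - (\<rho> 0 j)\<^sup>2) / 2) + hx j * (\<rho> 0 j * (\<rho> 0 j - \<rho>0 j)))"
      by (simp add: sum.distrib)
    also have "\<dots> = (\<Sum>j=0..nx. (1/2) * (hx j * (\<rho> nt j)\<^sup>2) - (1/2) * (hx j * (\<rho>0 j)\<^sup>2)
        + (1/2) * (hx j * (\<rho> 0 j - \<rho>0 j)\<^sup>2))"
      by (intro sum.cong refl) (simp add: field_simps power2_eq_square)
    also have "\<dots> = (1/2) * (\<Sum>j=0..nx. hx j * (\<rho> nt j)\<^sup>2) - (1/2) * (\<Sum>j=0..nx. hx j * (\<rho>0 j)\<^sup>2)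
        + (1/2) * (\<Sum>j=0..nx. hx j * (\<rho> 0 j - \<rho>0 j)\<^sup>2)"
      by (simp only: sum.distrib sum_subtractf sum_distrib_left)
    finally show ?thesis .
  qed
  have T6: "0 \<le> (\<Sum>j=0..nx. hx j * (\<rho> 0 j - \<rho>0 j)\<^sup>2)"
    using hxp by (intro sum_nonneg mult_nonneg_nonneg) (auto simp: less_imp_le)
  show ?thesis using E T1 T2 T3 T4 T5 T6 by linarith
qed


lemma tendsto_divc: "(f \<longlongrightarrow> l) F \<Longrightarrow> ((\<lambda>x. f x / c) \<longlongrightarrow> l / (c::real)) F"
  unfolding divide_inverse by (rule tendsto_mult_right)

lemma Dt_tendsto:
  assumes "\<forall>l\<le>nt. ((\<lambda>e. u e l j) \<longlongrightarrow> a l j) F"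
  shows "((\<lambda>e. Dt nt ht Qt (u e) i j) \<longlongrightarrow> Dt nt ht Qt a i j) F"
  unfolding Dt_def using assms by (intro tendsto_divc tendsto_intros tendsto_sum) auto

lemma Dxt_tendsto:
  assumes "\<forall>l\<le>nx. ((\<lambda>e. u e i l) \<longlongrightarrow> a i l) F"
  shows "((\<lambda>e. Dxt nx hx Qx (u e) i j) \<longlongrightarrow> Dxt nx hx Qx a i j) F"
proof -
  have s: "((\<lambda>e. (\<Sum>l=0..nx. Qx j l * u e i l)) \<longlongrightarrow> (\<Sum>l=0..nx. Qx j l * a i l)) F"
    using assms by (intro tendsto_intros tendsto_sum) auto
  have n: "((\<lambda>e. u e i nx) \<longlongrightarrow> a i nx) F" and z: "((\<lambda>e. u e i 0) \<longlongrightarrow> a i 0) F"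
    using assms by auto
  show ?thesis
    unfolding Dxt_Aop Aop_def
    by (intro tendsto_divc tendsto_diff s tendsto_mult_left)
       (cases "j = nx"; cases "j = 0"; simp; intro tendsto_intros n z)+
qed

lemma sat_tendsto:
  assumes "((\<lambda>e. u e 0 j) \<longlongrightarrow> a 0 j) F"
  shows "((\<lambda>e. sat ht (u e) u0 i j) \<longlongrightarrow> sat ht a u0 i j) F"
  unfolding sat_def using assms by (cases "i = 0") (simp_all, intro tendsto_divc tendsto_intros)

lemma vavg_tendsto:
  assumes "\<forall>k\<in>{1..nv}. ((\<lambda>e. f e k i j) \<longlongrightarrow> a k i j) F"
  shows "((\<lambda>e. vavg nv \<omega> (f e) i j) \<longlongrightarrow> vavg nv \<omega> a i j) F"
  unfolding vavg_def using assms by (intro tendsto_intros tendsto_sum) auto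

lemma Dt_scale: "Dt nt ht Qt (\<lambda>i j. c * u i j) i j = c * Dt nt ht Qt u i j"
  unfolding Dt_def by (simp add: sum_distrib_left mult_ac)

lemma Dxt_scale: "Dxt nx hx Qx (\<lambda>i j. c * u i j) i j = c * Dxt nx hx Qx u i j"
  unfolding Dxt_def Dx_def by (simp add: sum_distrib_left mult_ac field_simps)

lemma sat_scale: "sat ht (\<lambda>i j. c * u i j) (\<lambda>j. c * u0 j) i j = c * sat ht u u0 i j"
  unfolding sat_def by (simp add: field_simps)


lemma part1:
  assumes sigs: "0 < \<sigma>s"
    and sch: "\<forall>\<^sub>F e in at_right 0. scheme nt ht Qt nx hx Qx nv v \<omega> \<sigma>s \<sigma>a e \<rho>0 g0 (\<rho> e) (g e)"
    and lim: "\<forall>i\<le>nt. \<forall>j\<le>nx. ((\<lambda>e. \<rho> e i j) \<longlongrightarrow> \<rho>lim i j) (at_right 0)"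
    and bnd: "\<forall>\<^sub>F e in at_right 0. \<forall>k\<in>{1..nv}. \<forall>i\<le>nt. \<forall>j\<le>nx. \<bar>g e k i j\<bar> \<le> B"
  shows "lim_scheme nt ht Qt nx hx Qx nv v \<omega> \<sigma>s \<sigma>a \<rho>0 \<rho>lim"
proof -
  let ?F = "at_right (0::real)"
  have epos: "\<forall>\<^sub>F e in ?F. 0 < e" by (rule eventually_at_right_less)
  have id0: "((\<lambda>e. e) \<longlongrightarrow> 0) ?F" by (rule tendsto_ident_at)
  have A: "((\<lambda>e. e * g e k i j) \<longlongrightarrow> 0) ?F" if "k\<in>{1..nv}" "i\<le>nt" "j\<le>nx" for k i j
  proof (rule tendsto_0_le[where K=B])
    show "((\<lambda>e. e) \<longlongrightarrow> 0) ?F" by (rule id0)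
    show "\<forall>\<^sub>F e in ?F. norm (e * g e k i j) \<le> norm e * B"
      using bnd by (rule eventually_mono) (use that in \<open>auto simp: abs_mult intro!: mult_left_mono\<close>)
  qed
  define G where "G k i j = - v k * Dxt nx hx Qx \<rho>lim i j / \<sigma>s" for k i j
  have Gl: "((\<lambda>e. g e k i j) \<longlongrightarrow> G k i j) ?F" if k: "k\<in>{1..nv}" and i: "i\<le>nt" and j: "j\<le>nx" for k i j
  proof -
    define V where "V e = vavg nv \<omega> (\<lambda>k' i j. v k' * Dxt nx hx Qx (g e k') i j) i j" for e
    have eq: "\<forall>\<^sub>F e in ?F. (- v k * Dxt nx hx Qx (\<rho> e) i j - e * (e * Dt nt ht Qt (g e k) i j)
        - v k * (e * Dxt nx hx Qx (g e k) i j) + e * V e - \<sigma>a * e * (e * g e k i j)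
        - e * (e * sat ht (g e k) (g0 k) i j)) / \<sigma>s = g e k i j"
      using eventually_conj[OF sch epos]
    proof (rule eventually_mono)
      fix e assume H: "scheme nt ht Qt nx hx Qx nv v \<omega> \<sigma>s \<sigma>a e \<rho>0 g0 (\<rho> e) (g e) \<and> 0 < e"
      then have E: "Dt nt ht Qt (g e k) i j + v k / e * Dxt nx hx Qx (g e k) i j - 1 / e * V e
          + v k / e\<^sup>2 * Dxt nx hx Qx (\<rho> e) i j = - (\<sigma>s / e\<^sup>2 + \<sigma>a) * g e k i j - sat ht (g e k) (g0 k) i j"
        unfolding scheme_def V_def using k i j by blast
      have ep: "0 < e" using H by blast
      show "(- v k * Dxt nx hx Qx (\<rho> e) i j - e * (e * Dt nt ht Qt (g e k) i j)
        - v k * (e * Dxt nx hx Qx (g e k) i j) + e * V e - \<sigma>a * e * (e * g e k i j)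
        - e * (e * sat ht (g e k) (g0 k) i j)) / \<sigma>s = g e k i j"
      proof -
        let ?g = "g e k i j" and ?Dr = "Dxt nx hx Qx (\<rho> e) i j" and ?Dt = "Dt nt ht Qt (g e k) i j"
          and ?s = "sat ht (g e k) (g0 k) i j" and ?Dg = "Dxt nx hx Qx (g e k) i j"
        from E have "\<sigma>s * ?g + (\<sigma>a * (e * (e * ?g)) + (v k * ?Dr + (e * (e * ?Dt) + (e * (e * ?s)
            + e * (v k * ?Dg))))) = e * V e"
          using ep by (simp add: field_simps power2_eq_square)
        then show ?thesis using sigs by (simp add: field_simps)
      qed
    qed
    have L1: "((\<lambda>e. Dxt nx hx Qx (\<rho> e) i j) \<longlongrightarrow> Dxt nx hx Qx \<rho>lim i j) ?F"
      using lim i by (intro Dxt_tendsto) auto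
    have L2: "((\<lambda>e. e * Dt nt ht Qt (g e k) i j) \<longlongrightarrow> 0) ?F"
    proof -
      have "((\<lambda>e. Dt nt ht Qt (\<lambda>i j. e * g e k i j) i j) \<longlongrightarrow> Dt nt ht Qt (\<lambda>i j. 0) i j) ?F"
        using A k j by (intro Dt_tendsto) auto
      then show ?thesis by (simp only: Dt_scale) (simp add: Dt_def)
    qed
    have L3: "((\<lambda>e. e * Dxt nx hx Qx (g e k') i j) \<longlongrightarrow> 0) ?F" if "k' \<in> {1..nv}" for k'
    proof -
      have "((\<lambda>e. Dxt nx hx Qx (\<lambda>i j. e * g e k' i j) i j) \<longlongrightarrow> Dxt nx hx Qx (\<lambda>i j. 0) i j) ?F"
        using A that i by (intro Dxt_tendsto) auto
      moreover have "Dxt nx hx Qx (\<lambda>i j. 0) i j = 0" by (simp add: Dxt_Aop Aop_def)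
      ultimately show ?thesis by (simp only: Dxt_scale)
    qed
    have L4: "((\<lambda>e. e * V e) \<longlongrightarrow> 0) ?F"
    proof -
      have eV: "e * V e = vavg nv \<omega> (\<lambda>k' i j. v k' * (e * Dxt nx hx Qx (g e k') i j)) i j" for e
        unfolding V_def vavg_def by (simp add: sum_distrib_left mult_ac)
      have "((\<lambda>e. vavg nv \<omega> (\<lambda>k' i j. v k' * (e * Dxt nx hx Qx (g e k') i j)) i j) \<longlongrightarrow> vavg nv \<omega> (\<lambda>k' i j. v k' * 0) i j) ?F"
      proof (rule vavg_tendsto[where f="\<lambda>e k' i j. v k' * (e * Dxt nx hx Qx (g e k') i j)" and a="\<lambda>k' i j. v k' * 0"])
        show "\<forall>k'\<in>{1..nv}. ((\<lambda>e. v k' * (e * Dxt nx hx Qx (g e k') i j)) \<longlongrightarrow> v k' * 0) ?F"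
          using L3 by (intro ballI tendsto_mult_left) auto
      qed
      then show ?thesis unfolding eV by (simp add: vavg_def)
    qed
    have L5: "((\<lambda>e. e * sat ht (g e k) (g0 k) i j) \<longlongrightarrow> 0) ?F"
    proof (cases "i = 0")
      case True
      have es: "e * sat ht (g e k) (g0 k) i j = (e * g e k 0 j - e * g0 k j) / ht 0" for e
        unfolding sat_def using True by (simp add: right_diff_distrib)
      have "((\<lambda>e. (e * g e k 0 j - e * g0 k j) / ht 0) \<longlongrightarrow> (0 - 0 * g0 k j) / ht 0) ?F"
        using A[OF k _ j, of 0] by (intro tendsto_divc tendsto_diff tendsto_mult_right id0) auto
      then show ?thesis unfolding es by simp
    next
      case False
      then show ?thesis by (simp add: sat_def)
    qed
    have L6: "((\<lambda>e. e * g e k i j) \<longlongrightarrow> 0) ?F" using A k i j by blast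
    have "((\<lambda>e. (- v k * Dxt nx hx Qx (\<rho> e) i j - e * (e * Dt nt ht Qt (g e k) i j)
        - v k * (e * Dxt nx hx Qx (g e k) i j) + e * V e - \<sigma>a * e * (e * g e k i j)
        - e * (e * sat ht (g e k) (g0 k) i j)) / \<sigma>s) \<longlongrightarrow>
        (- v k * Dxt nx hx Qx \<rho>lim i j - 0 * 0 - v k * 0 + 0 - \<sigma>a * 0 * 0 - 0 * 0) / \<sigma>s) ?F"
      by (intro tendsto_divc tendsto_diff tendsto_add tendsto_mult tendsto_mult_left L1 L2 L3[OF k] L4 L5 L6 id0 tendsto_const)
    then have "((\<lambda>e. (- v k * Dxt nx hx Qx (\<rho> e) i j - e * (e * Dt nt ht Qt (g e k) i j)
        - v k * (e * Dxt nx hx Qx (g e k) i j) + e * V e - \<sigma>a * e * (e * g e k i j)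
        - e * (e * sat ht (g e k) (g0 k) i j)) / \<sigma>s) \<longlongrightarrow> G k i j) ?F"
      by (simp add: G_def)
    then show ?thesis using eq by (rule Lim_transform_eventually)
  qed
  define S where "S = (\<Sum>k=1..nv. \<omega> k * v k ^ 2)"
  define X where "X = (\<lambda>i j. S / \<sigma>s * Dxt nx hx Qx \<rho>lim i j)"
  have vG: "vavg nv \<omega> (\<lambda>k i j. v k * G k i j) = (\<lambda>i j. (-1) * X i j)"
  proof (intro ext)
    fix i j
    have "S / \<sigma>s * Dxt nx hx Qx \<rho>lim i j = (\<Sum>k=1..nv. (\<omega> k * v k ^ 2) * (Dxt nx hx Qx \<rho>lim i j / \<sigma>s))"
      unfolding S_def by (simp add: sum_distrib_right sum_divide_distrib)
    then show "vavg nv \<omega> (\<lambda>k i j. v k * G k i j) i j = (-1) * X i j"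
      unfolding vavg_def G_def X_def by (simp add: sum_negf[symmetric] power2_eq_square mult_ac)
  qed
  have nb: "?F \<noteq> bot" using trivial_limit_at_right_real unfolding trivial_limit_def by blast
  show ?thesis unfolding lim_scheme_def
  proof (intro allI impI)
    fix i j assume i: "i \<le> nt" and j: "j \<le> nx"
    have eqr: "\<forall>\<^sub>F e in ?F. Dt nt ht Qt (\<rho> e) i j + Dxt nx hx Qx (vavg nv \<omega> (\<lambda>k i j. v k * g e k i j)) i j
          = - \<sigma>a * \<rho> e i j - sat ht (\<rho> e) \<rho>0 i j"
      using sch by (rule eventually_mono) (use i j in \<open>auto simp: scheme_def\<close>)
    have LL: "((\<lambda>e. Dt nt ht Qt (\<rho> e) i j + Dxt nx hx Qx (vavg nv \<omega> (\<lambda>k i j. v k * g e k i j)) i j)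
        \<longlongrightarrow> Dt nt ht Qt \<rho>lim i j + Dxt nx hx Qx (vavg nv \<omega> (\<lambda>k i j. v k * G k i j)) i j) ?F"
    proof (intro tendsto_add)
      show "((\<lambda>e. Dt nt ht Qt (\<rho> e) i j) \<longlongrightarrow> Dt nt ht Qt \<rho>lim i j) ?F"
        using lim j by (intro Dt_tendsto) auto
      show "((\<lambda>e. Dxt nx hx Qx (vavg nv \<omega> (\<lambda>k i j. v k * g e k i j)) i j)
          \<longlongrightarrow> Dxt nx hx Qx (vavg nv \<omega> (\<lambda>k i j. v k * G k i j)) i j) ?F"
      proof (rule Dxt_tendsto, intro allI impI)
        fix l assume l: "l \<le> nx"
        show "((\<lambda>e. vavg nv \<omega> (\<lambda>k i j. v k * g e k i j) i l) \<longlongrightarrow> vavg nv \<omega> (\<lambda>k i j. v k * G k i j) i l) ?F"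
          using Gl i l by (intro vavg_tendsto) (auto intro!: tendsto_mult_left)
      qed
    qed
    have LR: "((\<lambda>e. - \<sigma>a * \<rho> e i j - sat ht (\<rho> e) \<rho>0 i j) \<longlongrightarrow> - \<sigma>a * \<rho>lim i j - sat ht \<rho>lim \<rho>0 i j) ?F"
      using lim i j by (intro tendsto_diff tendsto_mult_left sat_tendsto) auto
    have LR2: "((\<lambda>e. - \<sigma>a * \<rho> e i j - sat ht (\<rho> e) \<rho>0 i j) \<longlongrightarrow> Dt nt ht Qt \<rho>lim i j + Dxt nx hx Qx (vavg nv \<omega> (\<lambda>k i j. v k * G k i j)) i j) ?F"
      using LL eqr by (rule Lim_transform_eventually)
    have U: "Dt nt ht Qt \<rho>lim i j + Dxt nx hx Qx (vavg nv \<omega> (\<lambda>k i j. v k * G k i j)) i j = - \<sigma>a * \<rho>lim i j - sat ht \<rho>lim \<rho>0 i j"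
      using tendsto_unique[OF nb LR2 LR] .
    have "Dxt nx hx Qx (vavg nv \<omega> (\<lambda>k i j. v k * G k i j)) i j = (-1) * Dxt nx hx Qx X i j"
      unfolding vG by (rule Dxt_scale)
    then show "lim_res nt ht Qt nx hx Qx nv v \<omega> \<sigma>s \<sigma>a \<rho>0 \<rho>lim i j = 0"
      using U unfolding lim_res_def X_def S_def by simp
  qed
qed


lemma poly_DERIV:
  "((\<lambda>z. \<Sum>b\<in>A. d b * z ^ e b) has_real_derivative (\<Sum>b\<in>A. d b * (real (e b) * y ^ (e b - Suc 0)))) (at y)"
  by (intro DERIV_sum DERIV_cmult DERIV_pow)

lemma poly_deriv:
  "deriv (\<lambda>z. \<Sum>b\<in>A. d b * z ^ e b) y = (\<Sum>b\<in>A. d b * (real (e b) * y ^ (e b - Suc 0)))"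
  by (rule DERIV_imp_deriv[OF poly_DERIV])

lemma exact:
  assumes "sbp n p x h Q" "i \<le> n" "finite A" "\<forall>a\<in>A. e a \<le> p"
  shows "(\<Sum>l=0..n. Q i l * (\<Sum>a\<in>A. d a * x l ^ e a)) / h i = (\<Sum>a\<in>A. d a * (real (e a) * x i ^ (e a - Suc 0)))"
proof -
  have ex: "(\<Sum>l=0..n. Q i l * x l ^ e a) / h i = real (e a) * x i ^ (e a - Suc 0)" if "a \<in> A" for a
    using assms that unfolding sbp_def by auto
  have "(\<Sum>l=0..n. Q i l * (\<Sum>a\<in>A. d a * x l ^ e a)) = (\<Sum>a\<in>A. d a * (\<Sum>l=0..n. Q i l * x l ^ e a))"
    by (simp add: sum_distrib_left mult_ac sum.swap[of _ A])
  then have "(\<Sum>l=0..n. Q i l * (\<Sum>a\<in>A. d a * x l ^ e a)) / h i = (\<Sum>a\<in>A. d a * (\<Sum>l=0..n. Q i l * x l ^ e a)) / h i"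
    by simp
  also have "\<dots> = (\<Sum>a\<in>A. d a * ((\<Sum>l=0..n. Q i l * x l ^ e a) / h i))"
    by (simp only: sum_divide_distrib[of _ A] times_divide_eq_right)
  also have "\<dots> = (\<Sum>a\<in>A. d a * (real (e a) * x i ^ (e a - Suc 0)))"
    by (intro sum.cong refl) (simp add: ex)
  finally show ?thesis .
qed

lemma Dxt_cong: "(\<forall>l\<le>nx. u i l = w i l) \<Longrightarrow> Dxt nx hx Qx u i j = Dxt nx hx Qx w i j"
proof -
  assume a: "\<forall>l\<le>nx. u i l = w i l"
  have "(\<Sum>l=0..nx. Qx j l * u i l) = (\<Sum>l=0..nx. Qx j l * w i l)" using a by (intro sum.cong) auto
  then show ?thesis unfolding Dxt_Aop Aop_def using a by simp
qed

lemma part2: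
  assumes SBPt: "sbp nt pt ts ht Qt"
    and SBPx: "sbp nx px xs hx Qx"
    and U: "\<forall>t x. u t x = (\<Sum>a=0..pt. \<Sum>b=0..px. c a b * t ^ a * x ^ b)"
    and per: "\<forall>t. u t (xs 0) = u t (xs nx)"
    and dper: "\<forall>t. deriv (\<lambda>y. u t y) (xs 0) = deriv (\<lambda>y. u t y) (xs nx)"
    and i: "i \<le> nt" and j: "j \<le> nx"
  shows "lim_res nt ht Qt nx hx Qx nv v \<omega> \<sigma>s \<sigma>a (\<lambda>j. u (ts 0) (xs j)) (\<lambda>i j. u (ts i) (xs j)) i j
    = deriv (\<lambda>s. u s (xs j)) (ts i)
      - (\<Sum>k=1..nv. \<omega> k * v k ^ 2) * deriv (\<lambda>y. (1 / \<sigma>s) * deriv (\<lambda>z. u (ts i) z) y) (xs j)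
      + \<sigma>a * u (ts i) (xs j)"
proof -
  define S where "S = (\<Sum>k=1..nv. \<omega> k * v k ^ 2)"
  define U' where "U' = (\<lambda>i j. u (ts i) (xs j))"
  have R1: "u s x = (\<Sum>a=0..pt. (\<Sum>b=0..px. c a b * x ^ b) * s ^ a)" for s x
    using U by (simp add: sum_distrib_left sum_distrib_right mult_ac)
  have R2: "u t z = (\<Sum>b=0..px. (\<Sum>a=0..pt. c a b * t ^ a) * z ^ b)" for t z
  proof -
    have "u t z = (\<Sum>b=0..px. \<Sum>a=0..pt. c a b * t ^ a * z ^ b)"
      unfolding U[rule_format] by (subst sum.swap) (rule refl)
    also have "\<dots> = (\<Sum>b=0..px. (\<Sum>a=0..pt. c a b * t ^ a) * z ^ b)"
      by (simp add: sum_distrib_right)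
    finally show ?thesis .
  qed
  define K where "K t b = (\<Sum>a=0..pt. c a b * t ^ a)" for t b
  define ux where "ux t y = (\<Sum>b=0..px. (K t b * real b) * y ^ (b - Suc 0))" for t y
  have Dux: "deriv (\<lambda>z. u t z) y = ux t y" for t y
  proof -
    have "(\<lambda>z. u t z) = (\<lambda>z. \<Sum>b=0..px. K t b * z ^ b)" using R2 unfolding K_def by auto
    then show ?thesis unfolding ux_def using poly_deriv[where d="K t" and A="{0..px}" and e="\<lambda>b. b" and y=y]
      by (simp add: mult_ac)
  qed
  have Dut: "deriv (\<lambda>s. u s x) t = (\<Sum>a=0..pt. (\<Sum>b=0..px. c a b * x ^ b) * (real a * t ^ (a - Suc 0)))" for t x
  proof -
    have eq: "(\<lambda>s. u s x) = (\<lambda>s. \<Sum>a=0..pt. (\<Sum>b=0..px. c a b * x ^ b) * s ^ a)" using R1 by auto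
    show ?thesis unfolding eq by (rule poly_deriv[where d="\<lambda>a. \<Sum>b=0..px. c a b * x ^ b" and A="{0..pt}" and e="\<lambda>a. a" and y=t])
  qed
  have Duxx: "deriv (\<lambda>y. (1 / \<sigma>s) * deriv (\<lambda>z. u t z) y) x
      = (\<Sum>b=0..px. (1 / \<sigma>s * (K t b * real b)) * (real (b - Suc 0) * x ^ (b - Suc 0 - Suc 0)))" for t x
  proof -
    have "(\<lambda>y. (1 / \<sigma>s) * deriv (\<lambda>z. u t z) y) = (\<lambda>y. \<Sum>b=0..px. (1 / \<sigma>s * (K t b * real b)) * y ^ (b - Suc 0))"
      unfolding Dux ux_def by (simp add: sum_distrib_left)
    then show ?thesis by (simp only:) (rule poly_deriv[where d="\<lambda>b. 1 / \<sigma>s * (K t b * real b)" and A="{0..px}" and e="\<lambda>b. b - Suc 0" and y=x])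
  qed
  have sat0: "sat ht U' (\<lambda>j. u (ts 0) (xs j)) i j = 0" by (simp add: sat_def U'_def)
  have DtU: "Dt nt ht Qt U' i j = deriv (\<lambda>s. u s (xs j)) (ts i)"
  proof -
    have "Dt nt ht Qt U' i j = (\<Sum>l=0..nt. Qt i l * (\<Sum>a=0..pt. (\<Sum>b=0..px. c a b * xs j ^ b) * ts l ^ a)) / ht i"
      unfolding Dt_def U'_def by (simp add: R1[symmetric])
    also have "\<dots> = (\<Sum>a=0..pt. (\<Sum>b=0..px. c a b * xs j ^ b) * (real a * ts i ^ (a - Suc 0)))"
      using exact[OF SBPt i, where A="{0..pt}" and e="\<lambda>a. a" and d="\<lambda>a. \<Sum>b=0..px. c a b * xs j ^ b"] by simp
    finally show ?thesis by (simp add: Dut)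
  qed
  have DxU: "Dxt nx hx Qx U' i' l = ux (ts i') (xs l)" if l: "l \<le> nx" for i' l
  proof -
    have a: "U' i' nx = U' i' 0" using per by (simp add: U'_def)
    have "Dxt nx hx Qx U' i' l = (\<Sum>m=0..nx. Qx l m * U' i' m) / hx l"
      unfolding Dxt_Aop Aop_def using a by simp
    also have "\<dots> = (\<Sum>m=0..nx. Qx l m * (\<Sum>b=0..px. K (ts i') b * xs m ^ b)) / hx l"
      by (simp only: U'_def R2 K_def)
    also have "\<dots> = ux (ts i') (xs l)"
      using exact[OF SBPx l, where A="{0..px}" and e="\<lambda>b. b" and d="K (ts i')"] unfolding ux_def by (simp add: mult_ac)
    finally show ?thesis .
  qed
  have DxxU: "Dxt nx hx Qx (\<lambda>i j. S / \<sigma>s * Dxt nx hx Qx U' i j) i j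
      = S * deriv (\<lambda>y. (1 / \<sigma>s) * deriv (\<lambda>z. u (ts i) z) y) (xs j)"
  proof -
    have C1: "Dxt nx hx Qx (\<lambda>i j. S / \<sigma>s * Dxt nx hx Qx U' i j) i j
        = S / \<sigma>s * Dxt nx hx Qx (\<lambda>i j. ux (ts i) (xs j)) i j"
    proof -
      have "Dxt nx hx Qx (\<lambda>i j. S / \<sigma>s * Dxt nx hx Qx U' i j) i j
          = Dxt nx hx Qx (\<lambda>i j. S / \<sigma>s * ux (ts i) (xs j)) i j"
        by (rule Dxt_cong) (simp add: DxU)
      also have "\<dots> = S / \<sigma>s * Dxt nx hx Qx (\<lambda>i j. ux (ts i) (xs j)) i j"
        by (rule Dxt_scale)
      finally show ?thesis .
    qed
    have bb: "ux (ts i) (xs nx) = ux (ts i) (xs 0)"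
      using dper[rule_format, of "ts i"] unfolding Dux by simp
    have "Dxt nx hx Qx (\<lambda>i j. ux (ts i) (xs j)) i j = (\<Sum>m=0..nx. Qx j m * ux (ts i) (xs m)) / hx j"
      unfolding Dxt_Aop Aop_def using bb by simp
    also have "\<dots> = (\<Sum>m=0..nx. Qx j m * (\<Sum>b=0..px. (K (ts i) b * real b) * xs m ^ (b - Suc 0))) / hx j"
      by (simp only: ux_def)
    also have "\<dots> = (\<Sum>b=0..px. (K (ts i) b * real b) * (real (b - Suc 0) * xs j ^ (b - Suc 0 - Suc 0)))"
      by (rule exact[OF SBPx j, where A="{0..px}" and e="\<lambda>b. b - Suc 0" and d="\<lambda>b. K (ts i) b * real b"]) auto
    finally have C2: "Dxt nx hx Qx (\<lambda>i j. ux (ts i) (xs j)) i j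
        = (\<Sum>b=0..px. (K (ts i) b * real b) * (real (b - Suc 0) * xs j ^ (b - Suc 0 - Suc 0)))" .
    have C3: "S / \<sigma>s * (\<Sum>b=0..px. (K (ts i) b * real b) * (real (b - Suc 0) * xs j ^ (b - Suc 0 - Suc 0)))
        = S * deriv (\<lambda>y. (1 / \<sigma>s) * deriv (\<lambda>z. u (ts i) z) y) (xs j)"
      unfolding Duxx by (simp add: sum_distrib_left mult_ac)
    show ?thesis using C1 C2 C3 by simp
  qed
  have LR: "lim_res nt ht Qt nx hx Qx nv v \<omega> \<sigma>s \<sigma>a (\<lambda>j. u (ts 0) (xs j)) (\<lambda>i j. u (ts i) (xs j)) i j
      = Dt nt ht Qt U' i j - Dxt nx hx Qx (\<lambda>i j. S / \<sigma>s * Dxt nx hx Qx U' i j) i j + \<sigma>a * U' i j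
        + sat ht U' (\<lambda>j. u (ts 0) (xs j)) i j"
    unfolding lim_res_def U'_def S_def by simp
  show ?thesis unfolding LR sat0 DtU DxxU by (simp add: U'_def S_def)
qed

theorem theorem3p5:
  fixes nt nx nv pt px :: nat
    and ts ht xs hx v \<omega> :: "nat \<Rightarrow> real"
    and Qt Qx :: "nat \<Rightarrow> nat \<Rightarrow> real"
    and \<sigma>s \<sigma>a :: real
  assumes SBPt: "sbp nt pt ts ht Qt"
    and SBPx: "sbp nx px xs hx Qx"
    and nv: "1 \<le> nv"
    and wpos: "\<forall>k\<in>{1..nv}. 0 < \<omega> k"
    and wsum: "(\<Sum>k=1..nv. \<omega> k) = 1"
    and wmean: "(\<Sum>k=1..nv. \<omega> k * v k) = 0"
    and sigs: "0 < \<sigma>s"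
    and siga: "0 \<le> \<sigma>a"
  shows
    \<comment> \<open>(1) asymptotic limit: eps -> 0 with bounded micro part gives the limit scheme\<close>
    "(\<forall>(\<rho> :: real \<Rightarrow> gf) (g :: real \<Rightarrow> nat \<Rightarrow> gf) (\<rho>lim :: gf) \<rho>0 g0.
        (\<forall>\<^sub>F \<epsilon> in at_right 0. scheme nt ht Qt nx hx Qx nv v \<omega> \<sigma>s \<sigma>a \<epsilon> \<rho>0 g0 (\<rho> \<epsilon>) (g \<epsilon>)) \<and>
        (\<forall>i\<le>nt. \<forall>j\<le>nx. ((\<lambda>\<epsilon>. \<rho> \<epsilon> i j) \<longlongrightarrow> \<rho>lim i j) (at_right 0)) \<and>
        (\<exists>B. \<forall>\<^sub>F \<epsilon> in at_right 0. \<forall>k\<in>{1..nv}. \<forall>i\<le>nt. \<forall>j\<le>nx. \<bar>g \<epsilon> k i j\<bar> \<le> B)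
        \<longrightarrow> lim_scheme nt ht Qt nx hx Qx nv v \<omega> \<sigma>s \<sigma>a \<rho>0 \<rho>lim)
     \<and>
    \<comment> \<open>(2) consistency: on periodic polynomial data of degree <= pt in t and <= px in x the
        limit-scheme residual equals the residual of the limit PDE at the grid points\<close>
     (\<forall>(c :: nat \<Rightarrow> nat \<Rightarrow> real) (u :: real \<Rightarrow> real \<Rightarrow> real).
        (\<forall>t x. u t x = (\<Sum>a=0..pt. \<Sum>b=0..px. c a b * t ^ a * x ^ b)) \<and>
        (\<forall>t. u t (xs 0) = u t (xs nx)) \<and>
        (\<forall>t. deriv (\<lambda>y. u t y) (xs 0) = deriv (\<lambda>y. u t y) (xs nx))
        \<longrightarrow> (\<forall>i\<le>nt. \<forall>j\<le>nx.
              lim_res nt ht Qt nx hx Qx nv v \<omega> \<sigma>s \<sigma>a (\<lambda>j. u (ts 0) (xs j))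
                 (\<lambda>i j. u (ts i) (xs j)) i j
              = deriv (\<lambda>s. u s (xs j)) (ts i)
                - (\<Sum>k=1..nv. \<omega> k * v k ^ 2) * deriv (\<lambda>y. (1 / \<sigma>s) * deriv (\<lambda>z. u (ts i) z) y) (xs j)
                + \<sigma>a * u (ts i) (xs j)))
     \<and>
    \<comment> \<open>(3) stability: energy at the final time bounded by the initial data\<close>
     (\<forall>(\<rho> :: gf) \<rho>0.
        lim_scheme nt ht Qt nx hx Qx nv v \<omega> \<sigma>s \<sigma>a \<rho>0 \<rho> \<longrightarrow>
        (1/2) * (\<Sum>j=0..nx. hx j * (\<rho> nt j)\<^sup>2) \<le> (1/2) * (\<Sum>j=0..nx. hx j * (\<rho>0 j)\<^sup>2))"
proof (intro conjI allI impI)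
  fix \<rho> :: "real \<Rightarrow> gf" and g :: "real \<Rightarrow> nat \<Rightarrow> gf" and \<rho>lim :: gf and \<rho>0 g0
  assume H: "(\<forall>\<^sub>F \<epsilon> in at_right 0. scheme nt ht Qt nx hx Qx nv v \<omega> \<sigma>s \<sigma>a \<epsilon> \<rho>0 g0 (\<rho> \<epsilon>) (g \<epsilon>)) \<and>
        (\<forall>i\<le>nt. \<forall>j\<le>nx. ((\<lambda>\<epsilon>. \<rho> \<epsilon> i j) \<longlongrightarrow> \<rho>lim i j) (at_right 0)) \<and>
        (\<exists>B. \<forall>\<^sub>F \<epsilon> in at_right 0. \<forall>k\<in>{1..nv}. \<forall>i\<le>nt. \<forall>j\<le>nx. \<bar>g \<epsilon> k i j\<bar> \<le> B)"
  then obtain B where B: "\<forall>\<^sub>F \<epsilon> in at_right 0. \<forall>k\<in>{1..nv}. \<forall>i\<le>nt. \<forall>j\<le>nx. \<bar>g \<epsilon> k i j\<bar> \<le> B"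
    by blast
  show "lim_scheme nt ht Qt nx hx Qx nv v \<omega> \<sigma>s \<sigma>a \<rho>0 \<rho>lim"
    using part1[OF sigs _ _ B] H by blast
next
  fix c :: "nat \<Rightarrow> nat \<Rightarrow> real" and u :: "real \<Rightarrow> real \<Rightarrow> real" and i j
  assume H: "(\<forall>t x. u t x = (\<Sum>a=0..pt. \<Sum>b=0..px. c a b * t ^ a * x ^ b)) \<and>
        (\<forall>t. u t (xs 0) = u t (xs nx)) \<and>
        (\<forall>t. deriv (\<lambda>y. u t y) (xs 0) = deriv (\<lambda>y. u t y) (xs nx))"
    and i: "i \<le> nt" and j: "j \<le> nx"
  show "lim_res nt ht Qt nx hx Qx nv v \<omega> \<sigma>s \<sigma>a (\<lambda>j. u (ts 0) (xs j))
                 (\<lambda>i j. u (ts i) (xs j)) i j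
              = deriv (\<lambda>s. u s (xs j)) (ts i)
                - (\<Sum>k=1..nv. \<omega> k * v k ^ 2) * deriv (\<lambda>y. (1 / \<sigma>s) * deriv (\<lambda>z. u (ts i) z) y) (xs j)
                + \<sigma>a * u (ts i) (xs j)"
    using H by (intro part2[OF SBPt SBPx _ _ _ i j]) auto
next
  fix \<rho> :: gf and \<rho>0
  assume "lim_scheme nt ht Qt nx hx Qx nv v \<omega> \<sigma>s \<sigma>a \<rho>0 \<rho>"
  then show "(1/2) * (\<Sum>j=0..nx. hx j * (\<rho> nt j)\<^sup>2) \<le> (1/2) * (\<Sum>j=0..nx. hx j * (\<rho>0 j)\<^sup>2)"
    by (rule part3[OF SBPt SBPx wpos sigs siga])
qed

end
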